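(* Let $G$ and $H$ be finitely generated residually finite groups, let $S$ be a finite symmetric generating set of $G\times H$, and let $(X_n)_{n\ge0}$ be the lazy random walk on $\mathrm{Cay}(G\times H,S)$. Write $X_n=(Y_n,Z_n)$ with $Y_n\in G$, $Z_n\in H$. Then for all $k\ge0$ and all $n$, $$\mathbb{P}[D_{G\times H}(X_n)>k]\le\mathbb{P}[D_G(Y_n)>k]+\mathbb{P}[D_H(Z_n)>k].$$
   Context: For a group $\Gamma$ and $g\ne e$, $D_\Gamma(g)=\min\{[\Gamma:N]: N\lhd\Gamma\text{ of finite index},\ g\notin N\}$, and $D_\Gamma(e)=0$. The lazy random walk on $\mathrm{Cay}(\Gamma,S)$ is the Markov chain with $X_0=e$ and transition matrix $\frac12I+\frac12P$, $P(x,y)=\frac1{|S|}\#\{s\in S:y=xs\}$. *)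

theory Defs
  imports "HOL-Algebra.Algebra" "HOL-Probability.Probability"
begin

definition fin_gen_group :: "('a, 'b) monoid_scheme \<Rightarrow> bool" where
  "fin_gen_group G \<longleftrightarrow> group G \<and>
     (\<exists>A. finite A \<and> A \<subseteq> carrier G \<and> generate G A = carrier G)"

definition fin_index_normal :: "('a, 'b) monoid_scheme \<Rightarrow> 'a set \<Rightarrow> bool" where
  "fin_index_normal G N \<longleftrightarrow> N \<lhd> G \<and> finite (rcosets\<^bsub>G\<^esub> N)"

definition residually_finite :: "('a, 'b) monoid_scheme \<Rightarrow> bool" where
  "residually_finite G \<longleftrightarrow> group G \<and>
     (\<forall>g\<in>carrier G. g \<noteq> \<one>\<^bsub>G\<^esub> \<longrightarrow> (\<exists>N. fin_index_normal G N \<and> g \<notin> N))"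

definition depth :: "('a, 'b) monoid_scheme \<Rightarrow> 'a \<Rightarrow> nat" where
  "depth G g = (if g = \<one>\<^bsub>G\<^esub> then 0
     else Inf {card (rcosets\<^bsub>G\<^esub> N) | N. fin_index_normal G N \<and> g \<notin> N})"

definition lazy_step :: "('a, 'b) monoid_scheme \<Rightarrow> 'a set \<Rightarrow> 'a \<Rightarrow> 'a pmf" where
  "lazy_step G S x = bind_pmf (bernoulli_pmf (1/2))
     (\<lambda>b. if b then return_pmf x else map_pmf (\<lambda>s. x \<otimes>\<^bsub>G\<^esub> s) (pmf_of_set S))"

fun lazy_walk :: "('a, 'b) monoid_scheme \<Rightarrow> 'a set \<Rightarrow> nat \<Rightarrow> 'a pmf" where
  "lazy_walk G S 0 = return_pmf \<one>\<^bsub>G\<^esub>"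
| "lazy_walk G S (Suc n) = bind_pmf (lazy_walk G S n) (lazy_step G S)"

end

theory Submission imports Defs begin

lemma rcoset_prod:
  assumes "group G" "group H" "a \<in> carrier G" "b \<in> carrier H" "N \<subseteq> carrier G"
  shows "r_coset (G \<times>\<times> H) (N \<times> carrier H) (a,b) = r_coset G N a \<times> carrier H"
proof
  show "r_coset (G \<times>\<times> H) (N \<times> carrier H) (a,b) \<subseteq> r_coset G N a \<times> carrier H"
    using assms group.is_monoid[OF assms(1)] group.is_monoid[OF assms(2)]
    by (auto simp: r_coset_def intro!: monoid.m_closed)
  show "r_coset G N a \<times> carrier H \<subseteq> r_coset (G \<times>\<times> H) (N \<times> carrier H) (a,b)"
  proof clarify
    fix x y assume x: "x \<in> r_coset G N a" and y: "y \<in> carrier H"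
    then obtain n where n: "n \<in> N" "x = n \<otimes>\<^bsub>G\<^esub> a" by (auto simp: r_coset_def)
    have "y = (y \<otimes>\<^bsub>H\<^esub> inv\<^bsub>H\<^esub> b) \<otimes>\<^bsub>H\<^esub> b"
      using assms y by (metis group.inv_closed group.is_monoid group.l_inv monoid.m_assoc monoid.r_one)
    moreover have "y \<otimes>\<^bsub>H\<^esub> inv\<^bsub>H\<^esub> b \<in> carrier H" using assms y by (metis group.inv_closed group.is_monoid monoid.m_closed)
    ultimately show "(x,y) \<in> r_coset (G \<times>\<times> H) (N \<times> carrier H) (a,b)"
      using n unfolding r_coset_def by force
  qed
qed

lemma rcosets_prod:
  assumes "group G" "group H" "N \<subseteq> carrier G"
  shows "rcosets\<^bsub>G \<times>\<times> H\<^esub> (N \<times> carrier H) = (\<lambda>C. C \<times> carrier H) ` (rcosets\<^bsub>G\<^esub> N)"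
proof -
  have o: "\<one>\<^bsub>H\<^esub> \<in> carrier H" using group.is_monoid[OF assms(2)] monoid.one_closed by blast
  show ?thesis
  unfolding RCOSETS_def image_UN image_insert image_empty
  proof (intro equalityI subsetI)
    fix C assume "C \<in> (\<Union>x\<in>carrier (G \<times>\<times> H). {N \<times> carrier H #>\<^bsub>G \<times>\<times> H\<^esub> x})"
    then obtain a b where "a \<in> carrier G" "b \<in> carrier H" "C = N \<times> carrier H #>\<^bsub>G \<times>\<times> H\<^esub> (a,b)" by auto
    then show "C \<in> (\<Union>x\<in>carrier G. {(N #>\<^bsub>G\<^esub> x) \<times> carrier H})"
      using rcoset_prod[OF assms(1,2) _ _ assms(3)] by auto
  next
    fix C assume "C \<in> (\<Union>x\<in>carrier G. {(N #>\<^bsub>G\<^esub> x) \<times> carrier H})"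
    then obtain a where "a \<in> carrier G" "C = (N #>\<^bsub>G\<^esub> a) \<times> carrier H" by auto
    then show "C \<in> (\<Union>x\<in>carrier (G \<times>\<times> H). {N \<times> carrier H #>\<^bsub>G \<times>\<times> H\<^esub> x})"
      using rcoset_prod[OF assms(1,2) _ o assms(3)] o by force
  qed
qed

lemma card_rcosets_prod:
  assumes "group G" "group H" "N \<subseteq> carrier G"
  shows "card (rcosets\<^bsub>G \<times>\<times> H\<^esub> (N \<times> carrier H)) = card (rcosets\<^bsub>G\<^esub> N)"
    "finite (rcosets\<^bsub>G \<times>\<times> H\<^esub> (N \<times> carrier H)) = finite (rcosets\<^bsub>G\<^esub> N)"
proof -
  have ne: "carrier H \<noteq> {}" using assms(2) group.is_monoid monoid.one_closed by blast
  have "inj_on (\<lambda>C. C \<times> carrier H) (rcosets\<^bsub>G\<^esub> N)"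
    using ne by (auto simp: inj_on_def times_eq_iff)
  then show "card (rcosets\<^bsub>G \<times>\<times> H\<^esub> (N \<times> carrier H)) = card (rcosets\<^bsub>G\<^esub> N)"
    "finite (rcosets\<^bsub>G \<times>\<times> H\<^esub> (N \<times> carrier H)) = finite (rcosets\<^bsub>G\<^esub> N)"
    by (simp_all add: rcosets_prod[OF assms] card_image finite_image_iff)
qed
lemma rcoset_prod2:
  assumes "group G" "group H" "a \<in> carrier G" "b \<in> carrier H" "N \<subseteq> carrier H"
  shows "r_coset (G \<times>\<times> H) (carrier G \<times> N) (a,b) = carrier G \<times> r_coset H N b"
proof
  show "r_coset (G \<times>\<times> H) (carrier G \<times> N) (a,b) \<subseteq> carrier G \<times> r_coset H N b"
    using assms group.is_monoid[OF assms(1)] group.is_monoid[OF assms(2)]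
    by (auto simp: r_coset_def intro!: monoid.m_closed)
  show "carrier G \<times> r_coset H N b \<subseteq> r_coset (G \<times>\<times> H) (carrier G \<times> N) (a,b)"
  proof clarify
    fix x y assume y: "y \<in> r_coset H N b" and x: "x \<in> carrier G"
    then obtain n where n: "n \<in> N" "y = n \<otimes>\<^bsub>H\<^esub> b" by (auto simp: r_coset_def)
    have "x = (x \<otimes>\<^bsub>G\<^esub> inv\<^bsub>G\<^esub> a) \<otimes>\<^bsub>G\<^esub> a"
      using assms x by (metis group.inv_closed group.is_monoid group.l_inv monoid.m_assoc monoid.r_one)
    moreover have "x \<otimes>\<^bsub>G\<^esub> inv\<^bsub>G\<^esub> a \<in> carrier G" using assms x by (metis group.inv_closed group.is_monoid monoid.m_closed)
    ultimately show "(x,y) \<in> r_coset (G \<times>\<times> H) (carrier G \<times> N) (a,b)"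
      using n unfolding r_coset_def by force
  qed
qed

lemma rcosets_prod2:
  assumes "group G" "group H" "N \<subseteq> carrier H"
  shows "rcosets\<^bsub>G \<times>\<times> H\<^esub> (carrier G \<times> N) = (\<lambda>C. carrier G \<times> C) ` (rcosets\<^bsub>H\<^esub> N)"
proof -
  have o: "\<one>\<^bsub>G\<^esub> \<in> carrier G" using group.is_monoid[OF assms(1)] monoid.one_closed by blast
  show ?thesis
  unfolding RCOSETS_def image_UN image_insert image_empty
  proof (intro equalityI subsetI)
    fix C assume "C \<in> (\<Union>x\<in>carrier (G \<times>\<times> H). {carrier G \<times> N #>\<^bsub>G \<times>\<times> H\<^esub> x})"
    then obtain a b where "a \<in> carrier G" "b \<in> carrier H" "C = carrier G \<times> N #>\<^bsub>G \<times>\<times> H\<^esub> (a,b)" by auto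
    then show "C \<in> (\<Union>x\<in>carrier H. {carrier G \<times> (N #>\<^bsub>H\<^esub> x)})"
      using rcoset_prod2[OF assms(1,2) _ _ assms(3)] by auto
  next
    fix C assume "C \<in> (\<Union>x\<in>carrier H. {carrier G \<times> (N #>\<^bsub>H\<^esub> x)})"
    then obtain b where "b \<in> carrier H" "C = carrier G \<times> (N #>\<^bsub>H\<^esub> b)" by auto
    then show "C \<in> (\<Union>x\<in>carrier (G \<times>\<times> H). {carrier G \<times> N #>\<^bsub>G \<times>\<times> H\<^esub> x})"
      using rcoset_prod2[OF assms(1,2) o _ assms(3)] o by force
  qed
qed

lemma card_rcosets_prod2:
  assumes "group G" "group H" "N \<subseteq> carrier H"
  shows "card (rcosets\<^bsub>G \<times>\<times> H\<^esub> (carrier G \<times> N)) = card (rcosets\<^bsub>H\<^esub> N)"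
    "finite (rcosets\<^bsub>G \<times>\<times> H\<^esub> (carrier G \<times> N)) = finite (rcosets\<^bsub>H\<^esub> N)"
proof -
  have ne: "carrier G \<noteq> {}" using assms(1) group.is_monoid monoid.one_closed by blast
  have "inj_on (\<lambda>C. carrier G \<times> C) (rcosets\<^bsub>H\<^esub> N)"
    using ne by (auto simp: inj_on_def times_eq_iff)
  then show "card (rcosets\<^bsub>G \<times>\<times> H\<^esub> (carrier G \<times> N)) = card (rcosets\<^bsub>H\<^esub> N)"
    "finite (rcosets\<^bsub>G \<times>\<times> H\<^esub> (carrier G \<times> N)) = finite (rcosets\<^bsub>H\<^esub> N)"
    by (simp_all add: rcosets_prod2[OF assms] card_image finite_image_iff)
qed

lemma depth_le1:
  assumes "group G" "group H" "residually_finite G" "g \<in> carrier G" "g \<noteq> \<one>\<^bsub>G\<^esub>" "h \<in> carrier H"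
  shows "depth (G \<times>\<times> H) (g,h) \<le> depth G g"
proof -
  define A where "A = {card (rcosets\<^bsub>G\<^esub> N) | N. fin_index_normal G N \<and> g \<notin> N}"
  define B where "B = {card (rcosets\<^bsub>G \<times>\<times> H\<^esub> N) | N. fin_index_normal (G \<times>\<times> H) N \<and> (g,h) \<notin> N}"
  have "A \<noteq> {}" using assms(3-5) unfolding residually_finite_def A_def by blast
  hence "Inf A \<in> A" by (rule Inf_nat_def1)
  then obtain N where N: "fin_index_normal G N" "g \<notin> N" "Inf A = card (rcosets\<^bsub>G\<^esub> N)"
    unfolding A_def by blast
  have Nsub: "N \<subseteq> carrier G" using N(1) unfolding fin_index_normal_def
    using normal_imp_subgroup subgroup.subset by blast
  have "N \<times> carrier H \<lhd> G \<times>\<times> H"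
    using group.DirProd_normal[OF assms(1) assms(2) _ group.normal_self[OF assms(2)]] N(1)
    unfolding fin_index_normal_def by blast
  hence "fin_index_normal (G \<times>\<times> H) (N \<times> carrier H)"
    using N(1) card_rcosets_prod[OF assms(1,2) Nsub] unfolding fin_index_normal_def by simp
  hence "Inf A \<in> B" using N card_rcosets_prod[OF assms(1,2) Nsub] unfolding B_def by force
  hence "Inf B \<le> Inf A" by (simp add: cInf_lower)
  moreover have "(g,h) \<noteq> \<one>\<^bsub>G \<times>\<times> H\<^esub>" using assms(5) by simp
  ultimately show ?thesis using assms(5) unfolding depth_def A_def B_def by simp
qed

lemma depth_le2:
  assumes "group G" "group H" "residually_finite H" "h \<in> carrier H" "h \<noteq> \<one>\<^bsub>H\<^esub>" "g \<in> carrier G"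
  shows "depth (G \<times>\<times> H) (g,h) \<le> depth H h"
proof -
  define A where "A = {card (rcosets\<^bsub>H\<^esub> N) | N. fin_index_normal H N \<and> h \<notin> N}"
  define B where "B = {card (rcosets\<^bsub>G \<times>\<times> H\<^esub> N) | N. fin_index_normal (G \<times>\<times> H) N \<and> (g,h) \<notin> N}"
  have "A \<noteq> {}" using assms(3-5) unfolding residually_finite_def A_def by blast
  hence "Inf A \<in> A" by (rule Inf_nat_def1)
  then obtain N where N: "fin_index_normal H N" "h \<notin> N" "Inf A = card (rcosets\<^bsub>H\<^esub> N)"
    unfolding A_def by blast
  have Nsub: "N \<subseteq> carrier H" using N(1) unfolding fin_index_normal_def
    using normal_imp_subgroup subgroup.subset by blast
  have "carrier G \<times> N \<lhd> G \<times>\<times> H"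
    using group.DirProd_normal[OF assms(1) assms(2) group.normal_self[OF assms(1)]] N(1)
    unfolding fin_index_normal_def by blast
  hence "fin_index_normal (G \<times>\<times> H) (carrier G \<times> N)"
    using N(1) card_rcosets_prod2[OF assms(1,2) Nsub] unfolding fin_index_normal_def by simp
  hence "Inf A \<in> B" using N card_rcosets_prod2[OF assms(1,2) Nsub] unfolding B_def by force
  hence "Inf B \<le> Inf A" by (simp add: cInf_lower)
  moreover have "(g,h) \<noteq> \<one>\<^bsub>G \<times>\<times> H\<^esub>" using assms(5) by simp
  ultimately show ?thesis using assms(5) unfolding depth_def A_def B_def by simp
qed

lemma walk_support:
  assumes "monoid M" "finite S" "S \<noteq> {}" "S \<subseteq> carrier M"
  shows "set_pmf (lazy_walk M S n) \<subseteq> carrier M"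
proof (induction n)
  case 0 then show ?case using assms(1) by (simp add: monoid.one_closed)
next
  case (Suc n)
  show ?case
  proof
    fix y assume "y \<in> set_pmf (lazy_walk M S (Suc n))"
    then obtain x where x: "x \<in> set_pmf (lazy_walk M S n)" "y \<in> set_pmf (lazy_step M S x)" by auto
    have xc: "x \<in> carrier M" using x(1) Suc by blast
    from x(2) show "y \<in> carrier M" using xc assms
      by (auto simp: lazy_step_def set_pmf_bernoulli split: if_splits intro: monoid.m_closed)
  qed
qed

theorem proposition4p6:
  fixes G :: "('a, 'c) monoid_scheme" and H :: "('b, 'd) monoid_scheme"
    and S :: "('a \<times> 'b) set" and k n :: nat
  assumes "fin_gen_group G" and "residually_finite G"
    and "fin_gen_group H" and "residually_finite H"
    and "finite S" and "S \<noteq> {}" and "S \<subseteq> carrier (G \<times>\<times> H)"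
    and "\<forall>s\<in>S. inv\<^bsub>G \<times>\<times> H\<^esub> s \<in> S"
    and "generate (G \<times>\<times> H) S = carrier (G \<times>\<times> H)"
  shows "measure_pmf.prob (lazy_walk (G \<times>\<times> H) S n) {x. depth (G \<times>\<times> H) x > k}
     \<le> measure_pmf.prob (lazy_walk (G \<times>\<times> H) S n) {x. depth G (fst x) > k}
      + measure_pmf.prob (lazy_walk (G \<times>\<times> H) S n) {x. depth H (snd x) > k}"
proof -
  let ?p = "lazy_walk (G \<times>\<times> H) S n"
  let ?A = "{x. depth (G \<times>\<times> H) x > k}"
  let ?B = "{x. depth G (fst x) > k}"
  let ?C = "{x. depth H (snd x) > k}"
  have gG: "group G" and gH: "group H" using assms(1,3) unfolding fin_gen_group_def by auto
  have gGH: "group (G \<times>\<times> H)" using DirProd_group[OF gG gH] .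
  have supp: "set_pmf ?p \<subseteq> carrier (G \<times>\<times> H)"
    using walk_support[OF group.is_monoid[OF gGH] assms(5,6,7)] .
  have sub: "?A \<inter> set_pmf ?p \<subseteq> ?B \<union> ?C"
  proof
    fix x assume x: "x \<in> ?A \<inter> set_pmf ?p"
    obtain g h where gh: "x = (g,h)" by (cases x)
    have gc: "g \<in> carrier G" and hc: "h \<in> carrier H" using x supp gh by auto
    show "x \<in> ?B \<union> ?C"
    proof (cases "g = \<one>\<^bsub>G\<^esub>")
      case True
      show ?thesis
      proof (cases "h = \<one>\<^bsub>H\<^esub>")
        case True
        then show ?thesis using x gh \<open>g = _\<close> by (simp add: depth_def)
      next
        case False
        then show ?thesis using depth_le2[OF gG gH assms(4) hc False gc] x gh by auto
      qed
    next
      case False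
      then show ?thesis using depth_le1[OF gG gH assms(2) gc False hc] x gh by auto
    qed
  qed
  have "measure_pmf.prob ?p ?A = measure_pmf.prob ?p (?A \<inter> set_pmf ?p)"
    by (simp add: measure_Int_set_pmf)
  also have "\<dots> \<le> measure_pmf.prob ?p (?B \<union> ?C)"
    using sub by (intro measure_pmf.finite_measure_mono) auto
  also have "\<dots> \<le> measure_pmf.prob ?p ?B + measure_pmf.prob ?p ?C"
    by (rule measure_subadditive) (simp_all add: measure_pmf.emeasure_finite)
  finally show ?thesis .
qed

end
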